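(* Let $n \ge 2$. For any experiment design $\mathcal{S} = (S_1,\dots,S_T)$ of subsets of $[n]$, whether adaptive or non-adaptive, that enables nest identification for $n$ items under the Nested Logit model with outside option satisfying Assumption 1 (in the sense defined in the context), we have $|\mathcal{S}| = T = \Omega(\log n)$.
   Context: Nested Logit model with outside option on items $[n]=\{1,\dots,n\}$: $\mathcal{N}$ is a partition of $[n]$ into nests, $N(i)$ the nest containing $i$; weights $v_i > 0$; parameters $\lambda_N \in [0,1]$, with an extra weight $v_N>0$ when $\lambda_N=0$. $v_N(S) = (\sum_{i \in N \cap S} v_i)^{\lambda_N}$ if $\lambda_N \in (0,1]$, $v_N(S) = v_N \mathbf{1}(N \cap S \neq \emptyset)$ if $\lambda_N = 0$. For $i \in S$, $\phi(i,S) = \frac{v_{N(i)}(S)}{1 + \sum_{N} v_N(S)} \cdot \frac{v_i}{\sum_{j \in N(i) \cap S} v_j}$, and the outside option has $\phi(0,S) = \frac{1}{1 + \sum_N v_N(S)}$. Assumption 1: $\lambda_N = 1$ iff $|N| = 1$. An experiment design queries assortments $S_1,\dots,S_T \subseteq [n]$ and observes the exact choice probabilities $\phi(\cdot, S_t)$ for each queried assortment; it is non-adaptive if the $S_t$ are fixed in advance and adaptive if each $S_t$ may depend on the probabilities observed for $S_1,\dots,S_{t-1}$. It enables nest identification if, for every Nested Logit model satisfying Assumption 1, the nest partition $\mathcal{N}$ is uniquely determined by the observed choice probabilities, i.e., no two such models with different nest partitions induce identical choice probabilities on all queried assortments. *)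

theory Defs
  imports Complex_Main "HOL-Library.Disjoint_Sets"
begin

text \<open>A Nested Logit model with outside option on items 1..n (item 0 is the outside option).\<close>
record nl_model =
  nests :: "nat set set"
  wt    :: "nat \<Rightarrow> real"
  lam   :: "nat set \<Rightarrow> real"
  nwt   :: "nat set \<Rightarrow> real"    \<comment> \<open>extra nest weight v_N (used when lambda_N = 0)\<close>

definition nl_valid :: "nat \<Rightarrow> nl_model \<Rightarrow> bool" where
  "nl_valid n M \<longleftrightarrow>
     partition_on {1..n} (nests M) \<and>
     (\<forall>i\<in>{1..n}. wt M i > 0) \<and>
     (\<forall>N\<in>nests M. 0 \<le> lam M N \<and> lam M N \<le> 1) \<and>
     (\<forall>N\<in>nests M. lam M N = 0 \<longrightarrow> nwt M N > 0) \<and>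
     (\<forall>N\<in>nests M. lam M N = 1 \<longleftrightarrow> card N = 1)"
  \<comment> \<open>the last conjunct is Assumption 1\<close>

definition nest_val :: "nl_model \<Rightarrow> nat set \<Rightarrow> nat set \<Rightarrow> real" where
  "nest_val M N S =
     (if lam M N > 0 then (\<Sum>i\<in>N \<inter> S. wt M i) powr (lam M N)
      else nwt M N * (if N \<inter> S \<noteq> {} then 1 else 0))"

definition nest_of :: "nl_model \<Rightarrow> nat \<Rightarrow> nat set" where
  "nest_of M i = (THE N. N \<in> nests M \<and> i \<in> N)"

definition choice_prob :: "nl_model \<Rightarrow> nat \<Rightarrow> nat set \<Rightarrow> real" where
  "choice_prob M i S =
     (if i = 0 then 1 / (1 + (\<Sum>N\<in>nests M. nest_val M N S))
      else if i \<in> S then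
        nest_val M (nest_of M i) S / (1 + (\<Sum>N\<in>nests M. nest_val M N S))
        * (wt M i / (\<Sum>j\<in>nest_of M i \<inter> S. wt M j))
      else 0)"

definition observe :: "nl_model \<Rightarrow> nat set \<Rightarrow> (nat \<Rightarrow> real)" where
  "observe M S = (\<lambda>i. if i \<in> insert 0 S then choice_prob M i S else 0)"

text \<open>An (adaptive) experiment design is a strategy mapping the history of queried
  assortments and observed probabilities to the next assortment.
  Non-adaptive designs are the strategies ignoring the history.\<close>
type_synonym strategy = "(nat set \<times> (nat \<Rightarrow> real)) list \<Rightarrow> nat set"

fun transcript :: "strategy \<Rightarrow> nl_model \<Rightarrow> nat \<Rightarrow> (nat set \<times> (nat \<Rightarrow> real)) list" where
  "transcript \<sigma> M 0 = []"
| "transcript \<sigma> M (Suc t) =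
     (let h = transcript \<sigma> M t in h @ [(\<sigma> h, observe M (\<sigma> h))])"

definition enables_nest_identification :: "nat \<Rightarrow> strategy \<Rightarrow> nat \<Rightarrow> bool" where
  "enables_nest_identification n \<sigma> T \<longleftrightarrow>
     (\<forall>h. \<sigma> h \<subseteq> {1..n}) \<and>
     (\<forall>M1 M2. nl_valid n M1 \<longrightarrow> nl_valid n M2 \<longrightarrow>
        transcript \<sigma> M1 T = transcript \<sigma> M2 T \<longrightarrow> nests M1 = nests M2)"

end

theory Submission
  imports Defs
begin

definition mB :: "nat \<Rightarrow> nl_model" where
  "mB n = \<lparr>nests = (\<lambda>k. {k}) ` {1..n}, wt = (\<lambda>_. 1),
           lam = (\<lambda>N. if card N = 1 then 1 else 0), nwt = (\<lambda>_. 2)\<rparr>"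

definition mA :: "nat \<Rightarrow> nat \<Rightarrow> nat \<Rightarrow> nl_model" where
  "mA n i j = \<lparr>nests = insert {i,j} ((\<lambda>k. {k}) ` ({1..n} - {i,j})), wt = (\<lambda>_. 1),
           lam = (\<lambda>N. if card N = 1 then 1 else 0), nwt = (\<lambda>_. 2)\<rparr>"

lemma valid_B: "nl_valid n (mB n)"
  unfolding nl_valid_def mB_def partition_on_def disjoint_def by auto

lemma valid_A:
  assumes "i \<in> {1..n}" "j \<in> {1..n}" "i \<noteq> j"
  shows "nl_valid n (mA n i j)"
  using assms unfolding nl_valid_def mA_def partition_on_def disjoint_def by auto

lemma nv_single_B: "nest_val (mB n) {k} S = (if k \<in> S then 1 else 0)"
  unfolding nest_val_def mB_def by auto

lemma nv_single_A: "nest_val (mA n i j) {k} S = (if k \<in> S then 1 else 0)"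
  unfolding nest_val_def mA_def by auto

lemma nv_pair_A: "i \<noteq> j \<Longrightarrow> nest_val (mA n i j) {i,j} S = (if i \<in> S \<or> j \<in> S then 2 else 0)"
  unfolding nest_val_def mA_def by auto

lemma sum_B: "(\<Sum>N\<in>nests (mB n). nest_val (mB n) N S) = (\<Sum>k\<in>{1..n}. if k \<in> S then 1 else 0)"
proof -
  have "(\<Sum>N\<in>nests (mB n). nest_val (mB n) N S) = (\<Sum>N\<in>(\<lambda>k. {k}) ` {1..n}. nest_val (mB n) N S)"
    by (simp add: mB_def)
  also have "\<dots> = (\<Sum>k\<in>{1..n}. nest_val (mB n) {k} S)"
    by (subst sum.reindex) (auto simp: inj_on_def)
  finally show ?thesis by (simp add: nv_single_B)
qed

lemma sum_A:
  assumes "i \<in> {1..n}" "j \<in> {1..n}" "i \<noteq> j" "i \<in> S \<longleftrightarrow> j \<in> S"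
  shows "(\<Sum>N\<in>nests (mA n i j). nest_val (mA n i j) N S) = (\<Sum>k\<in>{1..n}. if k \<in> S then 1 else 0)"
proof -
  have ni: "{i,j} \<notin> (\<lambda>k. {k}) ` ({1..n} - {i,j})" using assms(3) by auto
  have "(\<Sum>N\<in>nests (mA n i j). nest_val (mA n i j) N S)
     = nest_val (mA n i j) {i,j} S + (\<Sum>N\<in>(\<lambda>k. {k}) ` ({1..n} - {i,j}). nest_val (mA n i j) N S)"
    using ni by (simp add: mA_def)
  also have "(\<Sum>N\<in>(\<lambda>k. {k}) ` ({1..n} - {i,j}). nest_val (mA n i j) N S)
     = (\<Sum>k\<in>{1..n} - {i,j}. nest_val (mA n i j) {k} S)"
    by (subst sum.reindex) (auto simp: inj_on_def)
  also have "\<dots> = (\<Sum>k\<in>{1..n} - {i,j}. if k \<in> S then 1 else 0)"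
    by (simp add: nv_single_A)
  finally have 1: "(\<Sum>N\<in>nests (mA n i j). nest_val (mA n i j) N S)
     = (if i \<in> S \<or> j \<in> S then 2 else 0) + (\<Sum>k\<in>{1..n} - {i,j}. if k \<in> S then 1 else 0)"
    using assms(3) by (simp add: nv_pair_A)
  have "(\<Sum>k\<in>{1..n}. if k \<in> S then 1 else 0) = (\<Sum>k\<in>{i,j}. if k \<in> S then 1 else (0::real))
       + (\<Sum>k\<in>{1..n} - {i,j}. if k \<in> S then 1 else 0)"
    using assms(1,2) by (subst sum.subset_diff[of "{i,j}"]) auto
  then show ?thesis using 1 assms(3,4) by auto
qed

lemma nest_of_B: "k \<in> {1..n} \<Longrightarrow> nest_of (mB n) k = {k}"
  unfolding nest_of_def by (rule the_equality) (auto simp: mB_def)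

lemma nest_of_A1: "k \<in> {1..n} \<Longrightarrow> k \<noteq> i \<Longrightarrow> k \<noteq> j \<Longrightarrow> nest_of (mA n i j) k = {k}"
  unfolding nest_of_def by (rule the_equality) (auto simp: mA_def)

lemma nest_of_A2: "k = i \<or> k = j \<Longrightarrow> nest_of (mA n i j) k = {i,j}"
  unfolding nest_of_def by (rule the_equality) (auto simp: mA_def)

lemma obs_eq:
  assumes "i \<in> {1..n}" "j \<in> {1..n}" "i \<noteq> j" "i \<in> S \<longleftrightarrow> j \<in> S" "S \<subseteq> {1..n}"
  shows "observe (mA n i j) S = observe (mB n) S"
proof
  fix x
  have s: "(\<Sum>N\<in>nests (mA n i j). nest_val (mA n i j) N S) = (\<Sum>N\<in>nests (mB n). nest_val (mB n) N S)"
    using sum_A[OF assms(1-4)] sum_B by simp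
  show "observe (mA n i j) S x = observe (mB n) S x"
  proof (cases "x \<in> S \<and> x \<noteq> 0")
    case False
    then show ?thesis unfolding observe_def choice_prob_def using s by auto
  next
    case True
    then have xn: "x \<in> {1..n}" using assms(5) by auto
    show ?thesis
    proof (cases "x = i \<or> x = j")
      case True
      then have ij: "i \<in> S" "j \<in> S" using \<open>x \<in> S \<and> x \<noteq> 0\<close> assms(4) by auto
      have no: "nest_of (mA n i j) x \<inter> S = {i,j}" using nest_of_A2[OF True] ij by auto
      define Z where "Z = (\<Sum>N\<in>nests (mB n). nest_val (mB n) N S)"
      have w: "(\<Sum>k\<in>{i,j}. wt (mA n i j) k) = 2" using assms(3) by (simp add: mA_def)
      have "observe (mA n i j) S x = 2 / (1 + Z) * (1 / 2)"
        unfolding observe_def choice_prob_def using \<open>x \<in> S \<and> x \<noteq> 0\<close> s no w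
          nest_of_A2[OF True] nv_pair_A[OF assms(3)] ij by (simp add: Z_def mA_def)
      moreover have "observe (mB n) S x = 1 / (1 + Z) * (1 / 1)"
        unfolding observe_def choice_prob_def using \<open>x \<in> S \<and> x \<noteq> 0\<close>
          nest_of_B[OF xn] nv_single_B by (simp add: Z_def mB_def)
      moreover have "2 / (1 + Z) * (1 / 2) = 1 / (1 + Z) * (1 / (1::real))" by (cases "1 + Z = 0") (simp_all add: field_simps)
      ultimately show ?thesis by (simp only:)
    next
      case False
      then show ?thesis unfolding observe_def choice_prob_def using s \<open>x \<in> S \<and> x \<noteq> 0\<close>
          nest_of_A1[OF xn] nest_of_B[OF xn] nv_single_A nv_single_B
        by (auto simp: mA_def mB_def)
    qed
  qed
qed


lemma transcript_prefix: "\<exists>r. transcript \<sigma> M (t + d) = transcript \<sigma> M t @ r"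
  by (induction d) (auto simp: Let_def)

lemma transcript_mono: "t \<le> T \<Longrightarrow> set (transcript \<sigma> M t) \<subseteq> set (transcript \<sigma> M T)"
  using transcript_prefix[of \<sigma> M t "T - t"] by auto

lemma transcript_same:
  assumes "i \<in> {1..n}" "j \<in> {1..n}" "i \<noteq> j" "\<forall>h. \<sigma> h \<subseteq> {1..n}"
    and sig: "\<forall>p\<in>set (transcript \<sigma> (mB n) T). (i \<in> fst p \<longleftrightarrow> j \<in> fst p)"
  shows "t \<le> T \<Longrightarrow> transcript \<sigma> (mA n i j) t = transcript \<sigma> (mB n) t"
proof (induction t)
  case 0
  then show ?case by simp
next
  case (Suc t)
  then have IH: "transcript \<sigma> (mA n i j) t = transcript \<sigma> (mB n) t" by simp
  define h where "h = transcript \<sigma> (mB n) t"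
  have "(\<sigma> h, observe (mB n) (\<sigma> h)) \<in> set (transcript \<sigma> (mB n) (Suc t))"
    by (simp add: h_def Let_def)
  then have "(\<sigma> h, observe (mB n) (\<sigma> h)) \<in> set (transcript \<sigma> (mB n) T)"
    using transcript_mono[OF Suc.prems] by blast
  then have "i \<in> \<sigma> h \<longleftrightarrow> j \<in> \<sigma> h" using sig by fastforce
  then have "observe (mA n i j) (\<sigma> h) = observe (mB n) (\<sigma> h)"
    using obs_eq[OF assms(1-3)] assms(4) by blast
  then show ?case using IH by (simp add: Let_def h_def)
qed

lemma n_le:
  assumes "enables_nest_identification n \<sigma> T"
  shows "n \<le> 2 ^ T"
proof (rule ccontr)
  assume "\<not> n \<le> 2 ^ T"
  define tr where "tr = transcript \<sigma> (mB n) T"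
  have lenT: "length (transcript \<sigma> M t) = t" for M t by (induction t) (auto simp: Let_def)
  define f where "f k = map (\<lambda>p. k \<in> fst p) tr" for k
  have "f ` {1..n} \<subseteq> {xs. set xs \<subseteq> (UNIV::bool set) \<and> length xs = T}"
    by (auto simp: f_def tr_def lenT)
  then have "card (f ` {1..n}) \<le> card {xs. set xs \<subseteq> (UNIV::bool set) \<and> length xs = T}"
    by (intro card_mono) (use finite_lists_length_eq[of "UNIV::bool set" T] in auto)
  also have "\<dots> = 2 ^ T" using card_lists_length_eq[of "UNIV::bool set" T] by simp
  finally have "\<not> inj_on f {1..n}" using \<open>\<not> n \<le> 2 ^ T\<close> card_image by fastforce
  then obtain i j where ij: "i \<in> {1..n}" "j \<in> {1..n}" "i \<noteq> j" "f i = f j"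
    unfolding inj_on_def by blast
  have sig: "\<forall>p\<in>set tr. (i \<in> fst p \<longleftrightarrow> j \<in> fst p)"
    using ij(4) unfolding f_def by (simp add: map_eq_conv)
  have sub: "\<forall>h. \<sigma> h \<subseteq> {1..n}" using assms by (simp add: enables_nest_identification_def)
  have "transcript \<sigma> (mA n i j) T = transcript \<sigma> (mB n) T"
    using transcript_same[OF ij(1-3) sub] sig by (simp add: tr_def)
  then have "nests (mA n i j) = nests (mB n)"
    using assms valid_A[OF ij(1-3)] valid_B unfolding enables_nest_identification_def by blast
  moreover have "{i,j} \<in> nests (mA n i j)" by (simp add: mA_def)
  moreover have "{i,j} \<notin> nests (mB n)" using ij(3) by (auto simp: mB_def)
  ultimately show False by simp
qed

theorem theoremB1:
  shows "\<exists>c>0. \<forall>n\<ge>2. \<forall>\<sigma> T. enables_nest_identification n \<sigma> T \<longrightarrow> c * ln (real n) \<le> real T"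
proof (intro exI[of _ "1 / ln 2"] conjI allI impI)
  show "(0::real) < 1 / ln 2" by simp
  fix n :: nat and \<sigma> T
  assume n2: "2 \<le> n" and e: "enables_nest_identification n \<sigma> T"
  have "real n \<le> 2 ^ T" using n_le[OF e] by (metis of_nat_le_iff of_nat_numeral of_nat_power)
  then have "ln (real n) \<le> ln (2 ^ T)" using n2 by simp
  also have "\<dots> = real T * ln 2" by (simp add: ln_realpow)
  finally show "1 / ln 2 * ln (real n) \<le> real T" by (simp add: field_simps)
qed

end
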